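(* Let $N,n,m,p$ be positive integers, $B\in\mathbb{R}^{n\times p}$, $C\in\mathbb{R}^{m\times n}$, $H\in\mathbb{R}^{n\times m}$, $W=[w_{ij}]\in\mathbb{R}^{N\times N}$ with $w_{ii}=0$ for all $i$, $\Delta=\mathrm{diag}(\delta_1,\dots,\delta_N)$ with $\delta_i\in\{0,1\}$, and $h>0$. Put $\Phi_s=e^hI_{Nn}+(e^h-1)W\otimes HC$ and $\Psi_s=(e^h-1)(\Delta\otimes B)$, and assume $0$ is not an eigenvalue of $\Phi_s$. Then the discrete-time system $X(k+1)=\Phi_sX(k)+\Psi_sU(k)$ is controllable if and only if the continuous-time system $\dot X(t)=(I_{Nn}+W\otimes HC)X(t)+(\Delta\otimes B)U(t)$ is controllable.
   Context: The continuous-time system is controllable in the usual sense (equivalently its PBH rank condition holds for all $s\in\mathbb{C}$). The discrete-time system is called controllable if every initial state can be steered to the origin in finitely many steps. $\otimes$ is the Kronecker product. *)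

theory Defs
  imports "HOL-Analysis.Analysis"
begin

text \<open>Kronecker product of matrices, indexed by product types:
  (A \<otimes> B) ((i,k),(j,l)) = A(i,j) * B(k,l).\<close>
definition kron :: "real^'c^'r \<Rightarrow> real^'d^'s \<Rightarrow> real^('c \<times> 'd)^('r \<times> 's)" where
  "kron A B = (\<chi> r. \<chi> c. A $ fst r $ fst c * B $ snd r $ snd c)"

text \<open>Matrix powers w.r.t. the matrix product.\<close>
primrec mat_pow :: "real^'n^'n \<Rightarrow> nat \<Rightarrow> real^'n^'n" where
  "mat_pow A 0 = mat 1"
| "mat_pow A (Suc k) = A ** mat_pow A k"

text \<open>Diagonal matrix.\<close>
definition diag_mat :: "('n \<Rightarrow> real) \<Rightarrow> real^'n^'n" where
  "diag_mat d = (\<chi> i j. if i = j then d i else 0)"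

text \<open>Controllability of the continuous-time system x' = A x + B u in the usual
  (Kalman) sense: the columns of B, AB, ..., A^(n-1) B span the whole state space.\<close>
definition ct_controllable :: "real^'n^'n \<Rightarrow> real^'u^'n \<Rightarrow> bool" where
  "ct_controllable A B \<longleftrightarrow>
     span (\<Union>k<CARD('n). range (\<lambda>j. column j (mat_pow A k ** B))) = UNIV"

text \<open>State of the discrete-time system x(k+1) = Phi x(k) + Psi u(k).\<close>
primrec dt_state :: "real^'n^'n \<Rightarrow> real^'u^'n \<Rightarrow> real^'n \<Rightarrow> (nat \<Rightarrow> real^'u) \<Rightarrow> nat \<Rightarrow> real^'n" where
  "dt_state Phi Psi x0 U 0 = x0"
| "dt_state Phi Psi x0 U (Suc k) = Phi *v dt_state Phi Psi x0 U k + Psi *v U k"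

text \<open>Discrete-time controllability: every initial state can be steered to the origin
  in finitely many steps.\<close>
definition dt_controllable :: "real^'n^'n \<Rightarrow> real^'u^'n \<Rightarrow> bool" where
  "dt_controllable Phi Psi \<longleftrightarrow> (\<forall>x0. \<exists>K U. dt_state Phi Psi x0 U K = 0)"

end

theory Submission
  imports Defs
begin

definition kr :: "real^'n^'n \<Rightarrow> (real^'n) set \<Rightarrow> nat \<Rightarrow> (real^'n) set" where
  "kr A S k = span (\<Union>i<k. (\<lambda>x. mat_pow A i *v x) ` S)"

lemma mat_pow_Suc_mv: "mat_pow A (Suc i) *v x = A *v (mat_pow A i *v x)"
  by (simp add: matrix_vector_mul_assoc)

lemma kr_0: "kr A S 0 = {0}"
  by (simp add: kr_def)

lemma kr_mono: "k \<le> l \<Longrightarrow> kr A S k \<subseteq> kr A S l"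
  unfolding kr_def by (intro span_mono UN_mono) auto

lemma span_Un_span2: "span (S \<union> span T) = span (S \<union> T)"
  by (simp add: span_Un span_span)

lemma kr_Suc: "kr A S (Suc k) = span (S \<union> (\<lambda>x. A *v x) ` kr A S k)"
proof -
  have "(\<Union>i<Suc k. (\<lambda>x. mat_pow A i *v x) ` S)
      = S \<union> (\<lambda>x. A *v x) ` (\<Union>i<k. (\<lambda>x. mat_pow A i *v x) ` S)"
    unfolding lessThan_Suc_eq_insert_0
    by (auto simp: image_image matrix_vector_mul_assoc image_UN)
  moreover have "(\<lambda>x. A *v x) ` kr A S k = span ((\<lambda>x. A *v x) ` (\<Union>i<k. (\<lambda>x. mat_pow A i *v x) ` S))"
    unfolding kr_def by (simp add: span_linear_image matrix_vector_mul_linear)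
  ultimately show ?thesis
    by (simp add: kr_def span_Un_span2)
qed

lemma kr_span: "kr A (span S) k = kr A S k"
  unfolding kr_def
proof (rule span_eq[THEN iffD2], rule conjI)
  show "(\<Union>i<k. (\<lambda>x. mat_pow A i *v x) ` span S) \<subseteq> span (\<Union>i<k. (\<lambda>x. mat_pow A i *v x) ` S)"
  proof (intro UN_least)
    fix i assume i: "i \<in> {..<k}"
    have "(\<lambda>x. mat_pow A i *v x) ` span S = span ((\<lambda>x. mat_pow A i *v x) ` S)"
      by (simp add: span_linear_image matrix_vector_mul_linear)
    also have "\<dots> \<subseteq> span (\<Union>i<k. (\<lambda>x. mat_pow A i *v x) ` S)"
      using i by (intro span_mono) auto
    finally show "(\<lambda>x. mat_pow A i *v x) ` span S \<subseteq> span (\<Union>i<k. (\<lambda>x. mat_pow A i *v x) ` S)" .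
  qed
next
  show "(\<Union>i<k. (\<lambda>x. mat_pow A i *v x) ` S) \<subseteq> span (\<Union>i<k. (\<lambda>x. mat_pow A i *v x) ` span S)"
    using span_superset[of S] by (intro subset_trans[OF _ span_superset]) blast
qed

lemma kr_stable_step: "kr A S k = kr A S (Suc k) \<Longrightarrow> kr A S (Suc k) = kr A S (Suc (Suc k))"
  by (metis kr_Suc)

lemma kr_stable_aux: "kr A S k = kr A S (Suc k) \<Longrightarrow> kr A S (k + j) = kr A S k \<and> kr A S (Suc (k + j)) = kr A S k"
proof (induction j)
  case 0 then show ?case by simp
next
  case (Suc j)
  then have a: "kr A S (k + Suc j) = kr A S k" by simp
  have "kr A S (k + j) = kr A S (Suc (k + j))" using Suc by simp
  then have "kr A S (Suc (k + j)) = kr A S (Suc (Suc (k + j)))" by (rule kr_stable_step)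
  then show ?case using a Suc by simp
qed

lemma kr_exists_stable: "\<exists>k\<le>CARD('n). kr (A::real^'n^'n) S k = kr A S (Suc k)"
proof (rule ccontr)
  assume "\<not> ?thesis"
  then have ne: "\<And>k. k \<le> CARD('n) \<Longrightarrow> kr A S k \<noteq> kr A S (Suc k)" by blast
  have "k \<le> Suc CARD('n) \<Longrightarrow> k \<le> dim (kr A S k)" for k
  proof (induction k)
    case 0 then show ?case by simp
  next
    case (Suc k)
    have "kr A S k \<subset> kr A S (Suc k)" using ne[of k] Suc.prems kr_mono[of k "Suc k" A S] by auto
    then have "span (kr A S k) \<subset> span (kr A S (Suc k))"
      by (simp add: kr_def span_span)
    then have "dim (kr A S k) < dim (kr A S (Suc k))" by (rule dim_psubset)
    then show ?case using Suc by simp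
  qed
  from this[of "Suc CARD('n)"] dim_subset_UNIV_cart[of "kr A S (Suc CARD('n))"]
  show False by simp
qed

lemma kr_final: "m \<ge> CARD('n) \<Longrightarrow> kr (A::real^'n^'n) S m = kr A S CARD('n)"
proof -
  assume m: "m \<ge> CARD('n)"
  obtain k where k: "k \<le> CARD('n)" "kr A S k = kr A S (Suc k)" using kr_exists_stable by blast
  have "kr A S (k + (m - k)) = kr A S k" using kr_stable_aux[OF k(2)] by blast
  moreover have "kr A S (k + (CARD('n) - k)) = kr A S k" using kr_stable_aux[OF k(2)] by blast
  ultimately show ?thesis using k m by simp
qed

lemma kr_le_final: "kr (A::real^'n^'n) S m \<subseteq> kr A S CARD('n)"
proof (cases "m \<le> CARD('n)")
  case True then show ?thesis by (rule kr_mono)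
next
  case False then show ?thesis using kr_final[of m A S] by simp
qed

lemma kr_invariant: "(\<lambda>x. A *v x) ` kr (A::real^'n^'n) S CARD('n) \<subseteq> kr A S CARD('n)"
proof -
  have "(\<lambda>x. A *v x) ` kr A S CARD('n) \<subseteq> kr A S (Suc CARD('n))"
    unfolding kr_Suc by (intro subset_trans[OF _ span_superset]) blast
  moreover have "kr A S (Suc CARD('n)) = kr A S CARD('n)" by (rule kr_final) simp
  ultimately show ?thesis by simp
qed


lemma mv_affine: "(mat 1 + c *\<^sub>R (A::real^'n^'n)) *v v = v + c *\<^sub>R (A *v v)"
proof -
  have "(mat 1 + c *\<^sub>R A) *v v = mat 1 *v v + (c *\<^sub>R A) *v v"
    by (rule matrix_vector_mult_add_rdistrib)
  also have "(c *\<^sub>R A) *v v = c *\<^sub>R (A *v v)"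
    by (rule scaleR_matrix_vector_assoc[symmetric])
  finally show ?thesis by simp
qed

lemma kr_affine:
  assumes c: "c \<noteq> 0"
  shows "kr (mat 1 + c *\<^sub>R A) S k = kr A S k"
proof (induction k)
  case 0 then show ?case by (simp add: kr_0)
next
  case (Suc k)
  define V where "V = kr A S k"
  have V1: "V \<subseteq> span (S \<union> (\<lambda>x. A *v x) ` V)"
    using kr_mono[of k "Suc k" A S] unfolding V_def kr_Suc by simp
  have V2: "V \<subseteq> span (S \<union> (\<lambda>x. (mat 1 + c *\<^sub>R A) *v x) ` V)"
    using kr_mono[of k "Suc k" "mat 1 + c *\<^sub>R A" S] Suc unfolding V_def kr_Suc by simp
  have "span (S \<union> (\<lambda>x. (mat 1 + c *\<^sub>R A) *v x) ` V) = span (S \<union> (\<lambda>x. A *v x) ` V)"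
  proof (rule span_eq[THEN iffD2], rule conjI)
    show "S \<union> (\<lambda>x. (mat 1 + c *\<^sub>R A) *v x) ` V \<subseteq> span (S \<union> (\<lambda>x. A *v x) ` V)"
    proof
      fix y assume "y \<in> S \<union> (\<lambda>x. (mat 1 + c *\<^sub>R A) *v x) ` V"
      then show "y \<in> span (S \<union> (\<lambda>x. A *v x) ` V)"
      proof
        assume "y \<in> S" then show ?thesis by (simp add: span_base)
      next
        assume "y \<in> (\<lambda>x. (mat 1 + c *\<^sub>R A) *v x) ` V"
        then obtain v where v: "v \<in> V" "y = v + c *\<^sub>R (A *v v)" by (auto simp: mv_affine)
        have a: "A *v v \<in> span (S \<union> (\<lambda>x. A *v x) ` V)" using v(1) by (intro span_base) auto
        have b: "v \<in> span (S \<union> (\<lambda>x. A *v x) ` V)" using v(1) V1 by blast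
        show ?thesis unfolding v(2) by (rule span_add[OF b span_mul[OF a]])
      qed
    qed
  next
    show "S \<union> (\<lambda>x. A *v x) ` V \<subseteq> span (S \<union> (\<lambda>x. (mat 1 + c *\<^sub>R A) *v x) ` V)"
    proof
      fix y assume "y \<in> S \<union> (\<lambda>x. A *v x) ` V"
      then show "y \<in> span (S \<union> (\<lambda>x. (mat 1 + c *\<^sub>R A) *v x) ` V)"
      proof
        assume "y \<in> S" then show ?thesis by (simp add: span_base)
      next
        assume "y \<in> (\<lambda>x. A *v x) ` V"
        then obtain v where v: "v \<in> V" "y = A *v v" by auto
        have e: "y = (1/c) *\<^sub>R ((mat 1 + c *\<^sub>R A) *v v - v)"
          using c by (simp add: mv_affine v(2))
        have a: "(mat 1 + c *\<^sub>R A) *v v \<in> span (S \<union> (\<lambda>x. (mat 1 + c *\<^sub>R A) *v x) ` V)"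
          using v(1) by (intro span_base) auto
        have b: "v \<in> span (S \<union> (\<lambda>x. (mat 1 + c *\<^sub>R A) *v x) ` V)" using v(1) V2 by blast
        show ?thesis unfolding e by (rule span_mul[OF span_diff[OF a b]])
      qed
    qed
  qed
  then show ?case unfolding kr_Suc Suc V_def by simp
qed

lemma dt_state_split: "dt_state P Q x0 U K = mat_pow P K *v x0 + dt_state P Q 0 U K"
  by (induction K) (simp_all add: matrix_vector_right_distrib matrix_vector_mul_assoc algebra_simps)

lemma dt_state_cong: "(\<forall>i<K. U i = U' i) \<Longrightarrow> dt_state P Q x0 U K = dt_state P Q x0 U' K"
  by (induction K) auto

lemma reach_eq: "{dt_state P Q 0 U K | U. True} = kr P (range (\<lambda>u. Q *v u)) K"
proof (induction K)
  case 0 then show ?case by (simp add: kr_0)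
next
  case (Suc K)
  define T where "T = range (\<lambda>u. Q *v u)"
  define V where "V = kr P T K"
  have sT: "span T = T" unfolding T_def
    by (metis span_linear_image matrix_vector_mul_linear span_UNIV)
  have sV: "span ((\<lambda>x. P *v x) ` V) = (\<lambda>x. P *v x) ` V"
    unfolding V_def kr_def by (simp add: span_linear_image matrix_vector_mul_linear span_span)
  have kS: "kr P T (Suc K) = {x + y |x y. x \<in> T \<and> y \<in> (\<lambda>x. P *v x) ` V}"
    unfolding kr_Suc V_def[symmetric] span_Un sT sV by simp
  have IH: "{dt_state P Q 0 U K | U. True} = V" using Suc unfolding V_def T_def .
  show ?case unfolding T_def[symmetric] kS
  proof (intro equalityI subsetI)
    fix z assume "z \<in> {dt_state P Q 0 U (Suc K) |U. True}"
    then obtain U where "z = P *v dt_state P Q 0 U K + Q *v U K" by auto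
    moreover have "dt_state P Q 0 U K \<in> V" using IH by blast
    ultimately show "z \<in> {x + y |x y. x \<in> T \<and> y \<in> (\<lambda>x. P *v x) ` V}"
      unfolding T_def by (auto simp: add.commute)
  next
    fix z assume "z \<in> {x + y |x y. x \<in> T \<and> y \<in> (\<lambda>x. P *v x) ` V}"
    then obtain u v where z: "z = Q *v u + P *v v" "v \<in> V" unfolding T_def by auto
    then obtain U where U: "v = dt_state P Q 0 U K" using IH by blast
    define U' where "U' = U(K := u)"
    have "dt_state P Q 0 U' K = v" unfolding U U'_def by (rule dt_state_cong[symmetric]) auto
    then have "dt_state P Q 0 U' (Suc K) = z" using z by (simp add: U'_def add.commute)
    then show "z \<in> {dt_state P Q 0 U (Suc K) |U. True}" by blast
  qed
qed

lemma span_columns_range: "span (range (\<lambda>j. column j M)) = range (\<lambda>x. (M::real^'a^'b) *v x)"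
proof (rule antisym)
  have "subspace (range (\<lambda>x. M *v x))"
    by (metis span_linear_image matrix_vector_mul_linear span_UNIV subspace_span)
  moreover have "range (\<lambda>j. column j M) \<subseteq> range (\<lambda>x. M *v x)"
    by (auto simp: matrix_vector_mult_basis[symmetric])
  ultimately show "span (range (\<lambda>j. column j M)) \<subseteq> range (\<lambda>x. M *v x)"
    by (rule span_minimal[rotated])
next
  show "range (\<lambda>x. M *v x) \<subseteq> span (range (\<lambda>j. column j M))"
  proof
    fix y assume "y \<in> range (\<lambda>x. M *v x)"
    then obtain x where y: "y = M *v x" by auto
    have "M *v x = (\<Sum>i\<in>UNIV. x $ i *\<^sub>R column i M)"
      by (simp add: matrix_mult_sum scalar_mult_eq_scaleR)
    also have "\<dots> \<in> span (range (\<lambda>j. column j M))"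
      by (intro span_sum span_mul span_base) auto
    finally show "y \<in> span (range (\<lambda>j. column j M))" using y by simp
  qed
qed

lemma column_mult: "column j (P ** M) = P *v column j M"
  by (simp add: column_def matrix_matrix_mult_def matrix_vector_mult_def vec_eq_iff)


lemma key:
  fixes P :: "real^'n^'n"
  assumes inj: "\<forall>v. P *v v = 0 \<longrightarrow> v = 0"
  shows "(\<forall>x0. \<exists>K. mat_pow P K *v x0 \<in> kr P T K) \<longleftrightarrow> kr P T CARD('n) = UNIV"
proof
  assume "kr P T CARD('n) = UNIV" then show "\<forall>x0. \<exists>K. mat_pow P K *v x0 \<in> kr P T K" by blast
next
  assume H: "\<forall>x0. \<exists>K. mat_pow P K *v x0 \<in> kr P T K"
  define R where "R = kr P T CARD('n)"
  have subR: "subspace R" by (simp add: R_def kr_def subspace_span)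
  have inv: "(\<lambda>x. P *v x) ` R \<subseteq> R" unfolding R_def by (rule kr_invariant)
  have powinv: "mat_pow P K *v x \<in> R" if "x \<in> R" for K x
  proof (induction K)
    case 0 then show ?case using that by (simp add: matrix_vector_mul_lid)
  next
    case (Suc K) then show ?case unfolding mat_pow_Suc_mv using inv by blast
  qed
  have powinj: "mat_pow P K *v v = 0 \<Longrightarrow> v = 0" for K v
  proof (induction K)
    case 0 then show ?case by (simp add: matrix_vector_mul_lid)
  next
    case (Suc K)
    then have "P *v (mat_pow P K *v v) = 0" by (simp only: mat_pow_Suc_mv)
    then show ?case using inj Suc.IH by blast
  qed
  have "x0 \<in> R" for x0
  proof -
    obtain K where K: "mat_pow P K *v x0 \<in> kr P T K" using H by blast
    then have inR: "mat_pow P K *v x0 \<in> R" using kr_le_final unfolding R_def by blast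
    let ?f = "\<lambda>x. mat_pow P K *v x"
    have lin: "linear ?f" by (rule matrix_vector_mul_linear)
    have injf: "inj ?f" using powinj by (simp add: linear_injective_0[OF lin])
    have "dim (?f ` R) = dim R"
      by (rule dim_image_eq[OF lin]) (use injf in \<open>auto simp: inj_on_def\<close>)
    moreover have "subspace (?f ` R)" by (rule linear_subspace_image[OF lin subR])
    moreover have "?f ` R \<subseteq> R" using powinv by auto
    ultimately have "?f ` R = R" using subR by (intro subspace_dim_equal) auto
    then obtain y where "y \<in> R" "?f x0 = ?f y" using inR by (metis imageE)
    then show ?thesis using injf by (metis injD)
  qed
  then show "kr P T CARD('n) = UNIV" unfolding R_def by blast
qed

lemma dt_iff: "dt_controllable P Q \<longleftrightarrow> (\<forall>x0. \<exists>K. mat_pow P K *v x0 \<in> kr P (range (\<lambda>u. Q *v u)) K)"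
proof -
  have "(\<exists>U. dt_state P Q x0 U K = 0) \<longleftrightarrow> mat_pow P K *v x0 \<in> kr P (range (\<lambda>u. Q *v u)) K" for x0 K
  proof -
    have e: "(a + b = 0) \<longleftrightarrow> (- a = b)" for a b :: "real^'a"
      by (metis add.commute add_eq_0_iff2 neg_eq_iff_add_eq_0)
    have "(\<exists>U. dt_state P Q x0 U K = 0) \<longleftrightarrow> -(mat_pow P K *v x0) \<in> {dt_state P Q 0 U K | U. True}"
      by (auto simp: dt_state_split[of P Q x0] e)
    also have "\<dots> \<longleftrightarrow> mat_pow P K *v x0 \<in> kr P (range (\<lambda>u. Q *v u)) K"
      unfolding reach_eq by (metis kr_def span_neg minus_minus)
    finally show ?thesis .
  qed
  then show ?thesis unfolding dt_controllable_def by blast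
qed

lemma ct_iff: "ct_controllable A KB \<longleftrightarrow> kr A (range (\<lambda>u. KB *v u)) CARD('n) = UNIV"
  for A :: "real^'n^'n"
proof -
  have "(\<Union>k<CARD('n). range (\<lambda>j. column j (mat_pow A k ** KB)))
      = (\<Union>k<CARD('n). (\<lambda>x. mat_pow A k *v x) ` range (\<lambda>j. column j KB))"
    by (simp add: column_mult image_image)
  then have "span (\<Union>k<CARD('n). range (\<lambda>j. column j (mat_pow A k ** KB)))
      = kr A (range (\<lambda>j. column j KB)) CARD('n)" by (simp add: kr_def)
  also have "\<dots> = kr A (range (\<lambda>u. KB *v u)) CARD('n)"
    by (metis kr_span span_columns_range)
  finally show ?thesis unfolding ct_controllable_def by simp
qed

theorem corollary12:
  fixes B :: "real^'p^'n" and C :: "real^'n^'m" and H :: "real^'m^'n"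
    and W :: "real^'N^'N" and \<delta> :: "'N \<Rightarrow> real" and h :: real
  assumes "\<forall>i. W $ i $ i = 0"
    and "\<forall>i. \<delta> i \<in> {0, 1}"
    and "h > 0"
    and "\<not> (\<exists>v. v \<noteq> 0 \<and>
            (exp h *\<^sub>R mat 1 + (exp h - 1) *\<^sub>R kron W (H ** C)) *v v = 0 *\<^sub>R v)"
  shows "dt_controllable (exp h *\<^sub>R mat 1 + (exp h - 1) *\<^sub>R kron W (H ** C))
                         ((exp h - 1) *\<^sub>R kron (diag_mat \<delta>) B)
         \<longleftrightarrow> ct_controllable (mat 1 + kron W (H ** C)) (kron (diag_mat \<delta>) B)"
  proof -
  define M where "M = kron W (H ** C)"
  define KB where "KB = kron (diag_mat \<delta>) B"
  define c where "c = exp h - 1"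
  have c0: "c \<noteq> 0" using assms(3) by (simp add: c_def)
  have Peq: "exp h *\<^sub>R mat 1 + c *\<^sub>R M = mat 1 + c *\<^sub>R (mat 1 + M)"
    by (simp add: c_def algebra_simps)
  have Teq: "range (\<lambda>u. (c *\<^sub>R KB) *v u) = range (\<lambda>u. KB *v u)"
  proof (intro equalityI subsetI)
    fix y assume "y \<in> range (\<lambda>u. (c *\<^sub>R KB) *v u)"
    then obtain u where "y = (c *\<^sub>R KB) *v u" by auto
    then have "y = KB *v (c *\<^sub>R u)"
      by (simp add: scaleR_matrix_vector_assoc[symmetric] matrix_vector_mult_scaleR)
    then show "y \<in> range (\<lambda>u. KB *v u)" by blast
  next
    fix y assume "y \<in> range (\<lambda>u. KB *v u)"
    then obtain u where "y = KB *v u" by auto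
    then have "y = (c *\<^sub>R KB) *v ((1/c) *\<^sub>R u)"
      using c0 by (simp add: scaleR_matrix_vector_assoc[symmetric] matrix_vector_mult_scaleR)
    then show "y \<in> range (\<lambda>u. (c *\<^sub>R KB) *v u)" by blast
  qed
  have inj: "\<forall>v. (exp h *\<^sub>R mat 1 + c *\<^sub>R M) *v v = 0 \<longrightarrow> v = 0"
    using assms(4) unfolding M_def c_def by auto
  have "dt_controllable (exp h *\<^sub>R mat 1 + c *\<^sub>R M) (c *\<^sub>R KB)
      \<longleftrightarrow> kr (exp h *\<^sub>R mat 1 + c *\<^sub>R M) (range (\<lambda>u. (c *\<^sub>R KB) *v u)) CARD('N \<times> 'n) = UNIV"
    unfolding dt_iff by (rule key[OF inj])
  also have "kr (exp h *\<^sub>R mat 1 + c *\<^sub>R M) (range (\<lambda>u. (c *\<^sub>R KB) *v u)) CARD('N \<times> 'n)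
      = kr (mat 1 + M) (range (\<lambda>u. KB *v u)) CARD('N \<times> 'n)"
    unfolding Peq Teq by (rule kr_affine[OF c0])
  also have "(\<dots> = UNIV) \<longleftrightarrow> ct_controllable (mat 1 + M) KB"
    by (rule ct_iff[symmetric])
  finally show ?thesis unfolding M_def KB_def c_def .
qed

end
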